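(* Let $t\ge 3$ and let $L$ be an $\mathbb{F}_q$-linear set of pseudoregulus type of $\Lambda=PG(1,q^t)$. Then its transversal points are uniquely determined: if $L=L_{\rho,\tau}$ with respect to transversal points $P_1,P_2$ and also $L=L_{\rho',\tau'}$ with respect to transversal points $P_1',P_2'$, then $\{P_1',P_2'\}=\{P_1,P_2\}$.
   Context: Let $\Lambda=PG(V,\mathbb{F}_{q^t})=PG(1,q^t)$ with $V$ a 2-dimensional $\mathbb{F}_{q^t}$-space; $\langle\mathbf u\rangle_{q^t}$ denotes the point defined by $\mathbf u\neq\mathbf 0$. Definition: given two distinct points $P_1=\langle\mathbf w\rangle_{q^t}$, $P_2=\langle\mathbf v\rangle_{q^t}$ of $\Lambda$, an automorphism $\tau$ of $\mathbb{F}_{q^t}$ with $\mathrm{Fix}(\tau)=\mathbb{F}_q$, and $\rho\in\mathbb{F}_{q^t}^*$, the set $L_{\rho,\tau}=\{\langle\lambda\mathbf w+\rho\lambda^\tau\mathbf v\rangle_{q^t}:\lambda\in\mathbb{F}_{q^t}^*\}$ is called an $\mathbb{F}_q$-linear set of pseudoregulus type of $\Lambda$, with transversal points $P_1$ and $P_2$. *)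

theory Defs
  imports Main
begin

text \<open>The 2-dimensional vector space V over the field 'a is modelled as 'a \<times> 'a.\<close>

definition vscale :: "'a::field \<Rightarrow> 'a \<times> 'a \<Rightarrow> 'a \<times> 'a" where
  "vscale c u = (c * fst u, c * snd u)"

definition vadd :: "'a::field \<times> 'a \<Rightarrow> 'a \<times> 'a \<Rightarrow> 'a \<times> 'a" where
  "vadd u v = (fst u + fst v, snd u + snd v)"

definition proj_pt :: "'a::field \<times> 'a \<Rightarrow> ('a \<times> 'a) set" where
  "proj_pt u = {vscale c u | c. True}"

definition field_aut :: "('a::field \<Rightarrow> 'a) \<Rightarrow> bool" where
  "field_aut \<tau> \<longleftrightarrow> bij \<tau> \<and> (\<forall>x y. \<tau> (x + y) = \<tau> x + \<tau> y) \<and> (\<forall>x y. \<tau> (x * y) = \<tau> x * \<tau> y)"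

definition Fix :: "('a \<Rightarrow> 'a) \<Rightarrow> 'a set" where
  "Fix \<tau> = {x. \<tau> x = x}"

text \<open>L_{rho,tau} with respect to transversal points <w> and <v>.\<close>
definition pseudoregulus_set ::
  "'a::field \<times> 'a \<Rightarrow> 'a \<times> 'a \<Rightarrow> 'a \<Rightarrow> ('a \<Rightarrow> 'a) \<Rightarrow> ('a \<times> 'a) set set" where
  "pseudoregulus_set w v \<rho> \<tau> =
     {proj_pt (vadd (vscale l w) (vscale (\<rho> * \<tau> l) v)) | l. l \<noteq> 0}"

end

theory Submission
  imports Defs "HOL-Computational_Algebra.Polynomial"
begin


lemma aut_basic:
  fixes \<sigma> :: "'a::field \<Rightarrow> 'a"
  assumes "field_aut \<sigma>"
  shows aut_0: "\<sigma> 0 = 0" and aut_1: "\<sigma> 1 = 1"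
    and aut_add: "\<sigma> (x + y) = \<sigma> x + \<sigma> y" and aut_mult: "\<sigma> (x * y) = \<sigma> x * \<sigma> y"
    and aut_eq0: "\<sigma> x = 0 \<longleftrightarrow> x = 0"
    and aut_inv: "\<sigma> (inverse x) = inverse (\<sigma> x)"
    and aut_div: "\<sigma> (x / y) = \<sigma> x / \<sigma> y"
proof -
  have b: "bij \<sigma>" and ad: "\<And>x y. \<sigma> (x + y) = \<sigma> x + \<sigma> y" and mu: "\<And>x y. \<sigma> (x * y) = \<sigma> x * \<sigma> y"
    using assms by (auto simp: field_aut_def)
  have "\<sigma> 0 + \<sigma> 0 = \<sigma> 0 + 0" using ad[of 0 0] by simp
  then show z: "\<sigma> 0 = 0" by (metis add_left_cancel)
  show "\<sigma> (x + y) = \<sigma> x + \<sigma> y" by (rule ad)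
  show "\<sigma> (x * y) = \<sigma> x * \<sigma> y" by (rule mu)
  have inj: "inj \<sigma>" using b bij_is_inj by blast
  show e0: "\<sigma> x = 0 \<longleftrightarrow> x = 0" for x using inj z by (metis injD)
  have o: "\<sigma> 1 = 1"
  proof -
    have "\<sigma> 1 = \<sigma> 1 * \<sigma> 1" using mu[of 1 1] by simp
    moreover have "\<sigma> 1 \<noteq> 0" using e0[of 1] by simp
    ultimately show ?thesis by (metis mult_cancel_left2)
  qed
  thus "\<sigma> 1 = 1" .
  have inv: "\<sigma> (inverse x) = inverse (\<sigma> x)" for x
  proof (cases "x = 0")
    case True thus ?thesis using z by simp
  next
    case False
    have "\<sigma> x * \<sigma> (inverse x) = 1" using mu[of x "inverse x"] o False by simp
    thus ?thesis by (metis inverse_unique)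
  qed
  thus "\<sigma> (inverse x) = inverse (\<sigma> x)" .
  show "\<sigma> (x / y) = \<sigma> x / \<sigma> y" by (simp add: divide_inverse mu inv)
qed

lemma fix_closed:
  fixes \<sigma> :: "'a::field \<Rightarrow> 'a"
  assumes "field_aut \<sigma>"
  shows "0 \<in> Fix \<sigma>" "1 \<in> Fix \<sigma>" "x \<in> Fix \<sigma> \<Longrightarrow> y \<in> Fix \<sigma> \<Longrightarrow> x + y \<in> Fix \<sigma>"
    "x \<in> Fix \<sigma> \<Longrightarrow> y \<in> Fix \<sigma> \<Longrightarrow> x * y \<in> Fix \<sigma>"
    "x \<in> Fix \<sigma> \<Longrightarrow> y \<in> Fix \<sigma> \<Longrightarrow> x / y \<in> Fix \<sigma>"
  using aut_basic[OF assms] by (auto simp: Fix_def)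

lemma prod_trick:
  fixes G :: "'a::field set"
  assumes "finite G" "0 \<notin> G" "\<And>x y. x \<in> G \<Longrightarrow> y \<in> G \<Longrightarrow> x * y \<in> G" "h \<in> G"
  shows "h ^ card G = 1"
proof -
  have inj: "inj_on ((*) h) G" using assms(2,4) by (auto intro: inj_onI)
  have sub: "(*) h ` G \<subseteq> G" using assms(3,4) by auto
  have img: "(*) h ` G = G"
    using card_image[OF inj] sub assms(1) by (metis card_subset_eq)
  have "prod (\<lambda>x. x) G = prod (\<lambda>x. x) ((*) h ` G)" using img by simp
  also have "\<dots> = prod ((*) h) G" using prod.reindex[OF inj] by simp
  also have "\<dots> = h ^ card G * prod (\<lambda>x. x) G" by (simp add: prod.distrib)
  finally have "h ^ card G * prod (\<lambda>x. x) G = 1 * prod (\<lambda>x. x) G" by simp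
  moreover have "prod (\<lambda>x. x) G \<noteq> 0" using assms(1,2) by auto
  ultimately show ?thesis by (metis mult_cancel_right)
qed



lemma fib_eq:
  fixes \<sigma> :: "'a::field \<Rightarrow> 'a"
  assumes "field_aut \<sigma>" "l0 \<noteq> 0"
  shows "{l. l \<noteq> 0 \<and> \<sigma> l / l = \<sigma> l0 / l0} = (\<lambda>k. k * l0) ` (Fix \<sigma> - {0})"
proof (intro set_eqI iffI)
  fix l assume "l \<in> {l. l \<noteq> 0 \<and> \<sigma> l / l = \<sigma> l0 / l0}"
  hence l: "l \<noteq> 0" "\<sigma> l / l = \<sigma> l0 / l0" by auto
  have s0: "\<sigma> l0 \<noteq> 0" using aut_eq0[OF assms(1)] assms(2) by simp
  have "\<sigma> (l / l0) = l / l0"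
    using l s0 assms(2) by (simp add: aut_div[OF assms(1)] field_simps)
  hence "l / l0 \<in> Fix \<sigma> - {0}" using l assms(2) by (simp add: Fix_def)
  moreover have "l = (l / l0) * l0" using assms(2) by simp
  ultimately show "l \<in> (\<lambda>k. k * l0) ` (Fix \<sigma> - {0})" by blast
next
  fix l assume "l \<in> (\<lambda>k. k * l0) ` (Fix \<sigma> - {0})"
  then obtain k where k: "k \<in> Fix \<sigma>" "k \<noteq> 0" "l = k * l0" by auto
  have "\<sigma> k = k" using k by (simp add: Fix_def)
  thus "l \<in> {l. l \<noteq> 0 \<and> \<sigma> l / l = \<sigma> l0 / l0}"
    using k assms(2) by (simp add: aut_mult[OF assms(1)])
qed

lemma ratio_card:
  fixes \<sigma> :: "'a::{field,finite} \<Rightarrow> 'a"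
  assumes "field_aut \<sigma>"
  shows "card ((\<lambda>l. \<sigma> l / l) ` (-{0})) * (card (Fix \<sigma>) - 1) = card (UNIV::'a set) - 1"
proof -
  define I where "I = (\<lambda>l. \<sigma> l / l) ` (-{0::'a})"
  define fib where "fib h = {l. l \<noteq> 0 \<and> \<sigma> l / l = h}" for h
  have U: "(\<Union>h\<in>I. fib h) = -{0}" unfolding I_def fib_def by auto
  have cf: "card (fib h) = card (Fix \<sigma>) - 1" if "h \<in> I" for h
  proof -
    obtain l0 where l0: "l0 \<noteq> 0" "h = \<sigma> l0 / l0" using \<open>h \<in> I\<close> unfolding I_def by auto
    have "fib h = (\<lambda>k. k * l0) ` (Fix \<sigma> - {0})" unfolding fib_def l0(2) by (rule fib_eq[OF assms l0(1)])
    moreover have "inj_on (\<lambda>k. k * l0) (Fix \<sigma> - {0})" using l0(1) by (auto intro: inj_onI)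
    moreover have "0 \<in> Fix \<sigma>" by (rule fix_closed(1)[OF assms])
    ultimately show ?thesis by (simp add: card_image card_Diff_singleton)
  qed
  have "card (-{0::'a}) = (\<Sum>h\<in>I. card (fib h))"
    unfolding U[symmetric] by (rule card_UN_disjoint) (auto simp: fib_def)
  also have "\<dots> = card I * (card (Fix \<sigma>) - 1)" using cf by simp
  finally show ?thesis unfolding I_def
    by (metis Compl_eq_Diff_UNIV card_Diff_singleton finite_class.finite_UNIV UNIV_I)
qed



lemma poly_ext_finite:
  fixes p r :: "'a::{field,finite} poly"
  assumes "\<And>x. poly p x = poly r x" "degree p < card (UNIV::'a set)" "degree r < card (UNIV::'a set)"
  shows "p = r"
proof (rule ccontr)
  assume ne: "p \<noteq> r"
  hence "p - r \<noteq> 0" by simp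
  hence "card {x. poly (p - r) x = 0} \<le> degree (p - r)" by (rule card_poly_roots_bound)
  moreover have "{x. poly (p - r) x = 0} = UNIV" using assms(1) by auto
  moreover have "degree (p - r) \<le> max (degree p) (degree r)" by (rule degree_diff_le_max)
  ultimately show False using assms(2,3) by simp
qed

lemma fix_card_ge2:
  fixes \<sigma> :: "'a::{field,finite} \<Rightarrow> 'a"
  assumes "field_aut \<sigma>"
  shows "card (Fix \<sigma>) \<ge> 2"
proof -
  have "{0,1} \<subseteq> Fix \<sigma>" using fix_closed[OF assms] by auto
  hence "card {0::'a,1} \<le> card (Fix \<sigma>)" by (intro card_mono) auto
  thus ?thesis by simp
qed

lemma fix_pow:
  fixes \<sigma> :: "'a::{field,finite} \<Rightarrow> 'a"
  assumes "field_aut \<sigma>" "x \<in> Fix \<sigma>"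
  shows "x ^ card (Fix \<sigma>) = x"
proof (cases "x = 0")
  case True thus ?thesis using fix_card_ge2[OF assms(1)] by simp
next
  case False
  have "x ^ card (Fix \<sigma> - {0}) = 1"
    by (rule prod_trick) (use assms False fix_closed[OF assms(1)] in auto)
  moreover have "card (Fix \<sigma> - {0}) = card (Fix \<sigma>) - 1"
    using fix_closed(1)[OF assms(1)] by (simp add: card_Diff_singleton)
  ultimately have "x ^ (card (Fix \<sigma>) - 1) = 1" by simp
  hence "x * x ^ (card (Fix \<sigma>) - 1) = x" by simp
  moreover have "Suc (card (Fix \<sigma>) - 1) = card (Fix \<sigma>)" using fix_card_ge2[OF assms(1)] by simp
  ultimately show ?thesis by (metis power_Suc)
qed

lemma frob_one:
  fixes \<sigma> :: "'a::{field,finite} \<Rightarrow> 'a" and y :: 'a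
  assumes "field_aut \<sigma>"
  shows "(1 + y) ^ card (Fix \<sigma>) = 1 + y ^ card (Fix \<sigma>)"
proof -
  define q where "q = card (Fix \<sigma>)"
  have q2: "q \<ge> 2" unfolding q_def by (rule fix_card_ge2[OF assms])
  define Q where "Q = [:1,1:]^q - 1 - monom (1::'a) q"
  have roots: "poly Q x = 0" if "x \<in> Fix \<sigma>" for x
  proof -
    have "1 + x \<in> Fix \<sigma>" using fix_closed[OF assms] that by auto
    hence "(1 + x) ^ q = 1 + x" unfolding q_def by (rule fix_pow[OF assms])
    moreover have "x ^ q = x" unfolding q_def by (rule fix_pow[OF assms that])
    ultimately show ?thesis by (simp add: Q_def poly_monom add.commute)
  qed
  have Q0: "Q = 0"
  proof (rule ccontr)
    assume ne: "Q \<noteq> 0"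
    have dle: "degree Q \<le> q" unfolding Q_def
      by (intro degree_diff_le) (auto simp: degree_linear_power degree_monom_le intro: degree_diff_le)
    have cq: "coeff Q q = 0" using q2 by (simp add: Q_def coeff_linear_power)
    have "degree Q \<noteq> q" using ne cq by (metis leading_coeff_0_iff)
    hence dl: "degree Q < q" using dle by simp
    have "Fix \<sigma> \<subseteq> {x. poly Q x = 0}" using roots by auto
    hence "card (Fix \<sigma>) \<le> card {x. poly Q x = 0}" by (intro card_mono) auto
    also have "\<dots> \<le> degree Q" by (rule card_poly_roots_bound[OF ne])
    finally show False using dl q_def by simp
  qed
  have "poly Q y = 0" using Q0 by simp
  thus ?thesis unfolding q_def[symmetric] by (simp add: Q_def poly_monom add.commute algebra_simps)
qed

lemma frob:
  fixes \<sigma> :: "'a::{field,finite} \<Rightarrow> 'a" and a b :: 'a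
  assumes "field_aut \<sigma>"
  shows "(a + b) ^ card (Fix \<sigma>) = a ^ card (Fix \<sigma>) + b ^ card (Fix \<sigma>)"
proof (cases "a = 0")
  case True thus ?thesis using fix_card_ge2[OF assms] by simp
next
  case False
  have "a + b = a * (1 + b / a)" using False by (simp add: field_simps)
  hence "(a + b) ^ card (Fix \<sigma>) = a ^ card (Fix \<sigma>) * (1 + (b / a) ^ card (Fix \<sigma>))"
    by (simp add: power_mult_distrib frob_one[OF assms])
  also have "\<dots> = a ^ card (Fix \<sigma>) + b ^ card (Fix \<sigma>)" using False
    by (simp add: field_simps power_divide)
  finally show ?thesis .
qed

lemma lin_pow_poly:
  fixes \<beta> \<delta> :: "'a::{field,finite}"
  assumes "\<And>a b::'a. (a + b) ^ N = a ^ N + b ^ N" "N < card (UNIV::'a set)"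
  shows "[:\<beta>, \<delta>:] ^ N = [:\<beta> ^ N:] + monom (\<delta> ^ N) N"
proof (rule poly_ext_finite)
  show "poly ([:\<beta>, \<delta>:] ^ N) x = poly ([:\<beta> ^ N:] + monom (\<delta> ^ N) N) x" for x
    using assms(1)[of \<beta> "\<delta> * x"] by (simp add: poly_monom power_mult_distrib mult.commute)
  have "degree ([:\<beta>, \<delta>:] ^ N) \<le> degree [:\<beta>, \<delta>:] * N" by (rule degree_power_le)
  also have "\<dots> \<le> N" by simp
  finally show "degree ([:\<beta>, \<delta>:] ^ N) < card (UNIV::'a set)" using assms(2) by simp
  have "degree ([:\<beta> ^ N:] + monom (\<delta> ^ N) N) \<le> max (degree [:\<beta> ^ N:]) (degree (monom (\<delta> ^ N) N))"
    by (rule degree_add_le_max)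
  also have "\<dots> \<le> N" using degree_monom_le[of "\<delta> ^ N" N] by simp
  finally show "degree ([:\<beta> ^ N:] + monom (\<delta> ^ N) N) < card (UNIV::'a set)" using assms(2) by simp
qed



lemma binom_split:
  fixes a b :: "'b::comm_semiring_1"
  shows "\<exists>R. (a + b) ^ m = a ^ m + b * R"
proof (induction m)
  case 0 show ?case by (rule exI[of _ 0]) simp
next
  case (Suc m)
  then obtain R where R: "(a + b) ^ m = a ^ m + b * R" by blast
  show ?case
    by (rule exI[of _ "a ^ m + (a + b) * R"]) (simp add: R algebra_simps)
qed

lemma const_pow: "[:c::'b::comm_semiring_1:] ^ m = [:c ^ m:]"
  by (induction m) (auto simp: algebra_simps)

lemma coeff_A0:
  fixes \<beta> \<delta> :: "'a::field"
  assumes "q \<ge> 2"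
  shows "coeff ([:\<beta>, \<delta>:] * ([:\<beta> ^ q:] + monom (\<delta> ^ q) q)) q = \<beta> * \<delta> ^ q"
    and "coeff ([:\<beta>, \<delta>:] * ([:\<beta> ^ q:] + monom (\<delta> ^ q) q)) (Suc q) = \<delta> * \<delta> ^ q"
proof -
  obtain r where r: "q = Suc (Suc r)" using assms by (metis add_2_eq_Suc le_Suc_ex)
  show "coeff ([:\<beta>, \<delta>:] * ([:\<beta> ^ q:] + monom (\<delta> ^ q) q)) q = \<beta> * \<delta> ^ q"
    using r by (simp add: coeff_monom)
  show "coeff ([:\<beta>, \<delta>:] * ([:\<beta> ^ q:] + monom (\<delta> ^ q) q)) (Suc q) = \<delta> * \<delta> ^ q"
    using r by (simp add: coeff_monom)
qed

lemma coeff_big: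
  fixes \<beta> \<delta> :: "'a::{field,finite}"
  assumes q2: "q \<ge> 2" and fq: "\<And>a b::'a. (a + b) ^ q = a ^ q + b ^ q"
    and qq: "q * q < card (UNIV::'a set)"
  shows "coeff ([:\<beta>, \<delta>:] ^ (1 + q + q * q * m)) q = \<beta> * \<delta> ^ q * (\<beta> ^ (q * q)) ^ m"
    and "coeff ([:\<beta>, \<delta>:] ^ (1 + q + q * q * m)) (Suc q) = \<delta> * \<delta> ^ q * (\<beta> ^ (q * q)) ^ m"
proof -
  have fqq: "(a + b) ^ (q * q) = a ^ (q * q) + b ^ (q * q)" for a b :: 'a
    by (simp add: power_mult fq)
  have q22: "q * 2 \<le> q * q" using q2 by (rule mult_le_mono2)
  have lt1: "q < q * q" and lt2: "Suc q < q * q" using q22 q2 by linarith+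
  have q1: "q < card (UNIV::'a set)" using qq lt1 by linarith
  define A0 where "A0 = [:\<beta>, \<delta>:] * ([:\<beta> ^ q:] + monom (\<delta> ^ q) q)"
  define E where "E = (\<beta> ^ (q * q)) ^ m"
  obtain R where R: "([:\<beta> ^ (q * q):] + monom (\<delta> ^ (q * q)) (q * q)) ^ m
       = [:\<beta> ^ (q * q):] ^ m + monom (\<delta> ^ (q * q)) (q * q) * R"
    using binom_split by blast
  have "[:\<beta>, \<delta>:] ^ (1 + q + q * q * m) = [:\<beta>, \<delta>:] * [:\<beta>, \<delta>:] ^ q * ([:\<beta>, \<delta>:] ^ (q * q)) ^ m"
    by (simp only: power_add power_mult power_one_right)
  also have "\<dots> = A0 * ([:\<beta> ^ (q * q):] + monom (\<delta> ^ (q * q)) (q * q)) ^ m"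
    unfolding A0_def lin_pow_poly[OF fq q1] lin_pow_poly[OF fqq qq] by simp
  also have "\<dots> = smult E A0 + monom 1 (q * q) * ([:\<delta> ^ (q * q):] * (A0 * R))"
  proof -
    have m1: "monom (\<delta> ^ (q * q)) (q * q) = monom 1 (q * q) * [:\<delta> ^ (q * q):]"
      by (simp add: mult.commute smult_monom)
    have m2: "A0 * [:E:] = smult E A0" by (simp add: mult.commute)
    show ?thesis unfolding R unfolding const_pow m1 E_def[symmetric] distrib_left m2
      by (simp only: mult.assoc mult.left_commute[of A0])
  qed
  finally have eq: "[:\<beta>, \<delta>:] ^ (1 + q + q * q * m) = smult E A0 + monom 1 (q * q) * ([:\<delta> ^ (q * q):] * (A0 * R))" .
  show "coeff ([:\<beta>, \<delta>:] ^ (1 + q + q * q * m)) q = \<beta> * \<delta> ^ q * (\<beta> ^ (q * q)) ^ m"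
    proof -
    have z: "coeff (monom 1 (q * q) * ([:\<delta> ^ (q * q):] * (A0 * R))) q = 0" using lt1 by (simp only: coeff_monom_mult if_True)
    show ?thesis unfolding eq coeff_add coeff_smult z using coeff_A0(1)[OF q2, of \<beta> \<delta>, folded A0_def]
      by (simp add: E_def)
  qed
  show "coeff ([:\<beta>, \<delta>:] ^ (1 + q + q * q * m)) (Suc q) = \<delta> * \<delta> ^ q * (\<beta> ^ (q * q)) ^ m"
    proof -
    have z: "coeff (monom 1 (q * q) * ([:\<delta> ^ (q * q):] * (A0 * R))) (Suc q) = 0" using lt2 by (simp only: coeff_monom_mult if_True)
    show ?thesis unfolding eq coeff_add coeff_smult z using coeff_A0(2)[OF q2, of \<beta> \<delta>, folded A0_def]
      by (simp add: E_def)
  qed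
qed


lemma vav: "vadd (vscale x w) (vscale y v) = (x * fst w + y * fst v, x * snd w + y * snd v)"
  by (simp add: vadd_def vscale_def)

lemma proj_scale:
  fixes u :: "'a::field \<times> 'a"
  assumes "c \<noteq> 0"
  shows "proj_pt (vscale c u) = proj_pt u"
proof (intro set_eqI iffI)
  fix x assume "x \<in> proj_pt (vscale c u)"
  then obtain a where "x = vscale a (vscale c u)" by (auto simp: proj_pt_def)
  hence "x = vscale (a * c) u" by (simp add: vscale_def)
  thus "x \<in> proj_pt u" by (auto simp: proj_pt_def)
next
  fix x assume "x \<in> proj_pt u"
  then obtain a where "x = vscale a u" by (auto simp: proj_pt_def)
  hence "x = vscale (a / c) (vscale c u)" using assms by (simp add: vscale_def)
  thus "x \<in> proj_pt (vscale c u)" by (auto simp: proj_pt_def)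
qed

lemma proj_dep:
  fixes u v :: "'a::field \<times> 'a"
  assumes "u \<noteq> (0, 0)" "v \<noteq> (0, 0)" "fst u * snd v - snd u * fst v = 0"
  shows "proj_pt u = proj_pt v"
proof -
  obtain u1 u2 v1 v2 where uv: "u = (u1, u2)" "v = (v1, v2)" by fastforce
  have "\<exists>c. c \<noteq> 0 \<and> v = vscale c u"
  proof (cases "u1 = 0")
    case True
    hence "u2 \<noteq> 0" using assms(1) uv by auto
    hence "v1 = 0" using assms(3) uv True by simp
    hence "v2 \<noteq> 0" using assms(2) uv by auto
    show ?thesis using \<open>u2 \<noteq> 0\<close> \<open>v2 \<noteq> 0\<close> True \<open>v1 = 0\<close> uv
      by (intro exI[of _ "v2 / u2"]) (simp add: vscale_def)
  next
    case False
    have "v2 = v1 * u2 / u1" using assms(3) uv False by (simp add: field_simps)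
    moreover have "v1 \<noteq> 0" using assms(2) uv \<open>v2 = v1 * u2 / u1\<close> by auto
    ultimately show ?thesis using False uv
      by (intro exI[of _ "v1 / u1"]) (simp add: vscale_def)
  qed
  then obtain c where "c \<noteq> 0" "v = vscale c u" by blast
  thus ?thesis using proj_scale by metis
qed

lemma indep:
  fixes w1 w2 v1 v2 :: "'a::field"
  assumes "w1 * v2 - w2 * v1 \<noteq> 0" "a * w1 + b * v1 = 0" "a * w2 + b * v2 = 0"
  shows "a = 0" "b = 0"
proof -
  have "a * (w1 * v2 - w2 * v1) = (a * w1 + b * v1) * v2 - (a * w2 + b * v2) * v1" by (simp add: algebra_simps)
  thus "a = 0" using assms by simp
  have "b * (w1 * v2 - w2 * v1) = (a * w2 + b * v2) * w1 - (a * w1 + b * v1) * w2" by (simp add: algebra_simps)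
  thus "b = 0" using assms by simp
qed


lemma mem_L:
  fixes w v :: "'a::field \<times> 'a"
  assumes D: "fst w * snd v - snd w * fst v \<noteq> 0"
    and xy: "(x, y) \<noteq> (0, 0)"
    and mem: "proj_pt (vadd (vscale x w) (vscale y v)) \<in> pseudoregulus_set w v \<rho> \<tau>"
  shows "x \<noteq> 0 \<and> (\<exists>l. l \<noteq> 0 \<and> y / x = \<rho> * \<tau> l / l)"
proof -
  obtain l where l: "l \<noteq> 0"
    and eq: "proj_pt (vadd (vscale x w) (vscale y v)) = proj_pt (vadd (vscale l w) (vscale (\<rho> * \<tau> l) v))"
    using mem by (auto simp: pseudoregulus_set_def)
  have "vadd (vscale x w) (vscale y v) \<in> proj_pt (vadd (vscale x w) (vscale y v))"
    unfolding proj_pt_def by (rule CollectI, rule exI[of _ 1]) (simp add: vscale_def)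
  then obtain c where c: "vadd (vscale x w) (vscale y v) = vscale c (vadd (vscale l w) (vscale (\<rho> * \<tau> l) v))"
    unfolding eq by (auto simp: proj_pt_def)
  hence e1: "(x - c * l) * fst w + (y - c * (\<rho> * \<tau> l)) * fst v = 0"
    and e2: "(x - c * l) * snd w + (y - c * (\<rho> * \<tau> l)) * snd v = 0"
    by (auto simp: vadd_def vscale_def algebra_simps)
  have x: "x = c * l" using indep(1)[OF D e1 e2] by simp
  have y: "y = c * (\<rho> * \<tau> l)" using indep(2)[OF D e1 e2] by simp
  have "c \<noteq> 0" using xy x y by auto
  hence "x \<noteq> 0" using x l by simp
  moreover have "y / x = \<rho> * \<tau> l / l" using x y \<open>c \<noteq> 0\<close> l by simp
  ultimately show ?thesis using l by blast
qed


lemma geo_sum: "(\<Sum>i<k. (q::nat) ^ i) * (q - 1) + 1 = q ^ k" if "q \<ge> 1"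
proof (induction k)
  case 0 show ?case by simp
next
  case (Suc k)
  have "(\<Sum>i<Suc k. q ^ i) * (q - 1) + 1 = (\<Sum>i<k. q ^ i) * (q - 1) + 1 + q ^ k * (q - 1)"
    by (simp add: algebra_simps)
  also have "\<dots> = q ^ k + q ^ k * (q - 1)" using Suc by simp
  also have "\<dots> = q ^ k * (1 + (q - 1))" by (simp add: algebra_simps)
  also have "\<dots> = q ^ Suc k" using that by (simp add: mult.commute)
  finally show ?case .
qed

lemma H_props:
  fixes \<sigma> :: "'a::{field,finite} \<Rightarrow> 'a"
  assumes "field_aut \<sigma>" "card (UNIV::'a set) = card (Fix \<sigma>) ^ t"
    and n: "n * (card (Fix \<sigma>) - 1) + 1 = card (Fix \<sigma>) ^ t"
  shows "card ((\<lambda>l. \<sigma> l / l) ` (-{0})) = n"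
    and "h \<in> (\<lambda>l. \<sigma> l / l) ` (-{0}) \<Longrightarrow> h ^ n = 1"
proof -
  define H where "H = (\<lambda>l. \<sigma> l / l) ` (-{0::'a})"
  have q2: "card (Fix \<sigma>) \<ge> 2" by (rule fix_card_ge2[OF assms(1)])
  have e: "card (UNIV::'a set) - 1 = n * (card (Fix \<sigma>) - 1)" using assms(2) n by linarith
  have eq: "card H * (card (Fix \<sigma>) - 1) = n * (card (Fix \<sigma>) - 1)"
    using ratio_card[OF assms(1)] e unfolding H_def by simp
  have ne: "card (Fix \<sigma>) - 1 \<noteq> 0" using q2 by simp
  have cH': "card H = n" using eq ne by simp
  thus cH: "card ((\<lambda>l. \<sigma> l / l) ` (-{0})) = n" unfolding H_def .
  have n0: "0 \<notin> H"
  proof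
    assume "0 \<in> H"
    then obtain l where l: "l \<noteq> 0" "0 = \<sigma> l / l" unfolding H_def by blast
    have "\<sigma> l \<noteq> 0" using l(1) aut_eq0[OF assms(1), of l] by simp
    thus False using l by simp
  qed
  have cl: "x * y \<in> H" if xH: "x \<in> H" and yH: "y \<in> H" for x y
  proof -
    obtain a where a: "a \<noteq> 0" "x = \<sigma> a / a" using xH unfolding H_def by blast
    obtain b where b: "b \<noteq> 0" "y = \<sigma> b / b" using yH unfolding H_def by blast
    note ab = a(1) b(1) a(2) b(2)
    hence "x * y = \<sigma> (a * b) / (a * b)" by (simp add: aut_mult[OF assms(1)])
    moreover have "a * b \<in> -{0}" using ab by simp
    ultimately show ?thesis unfolding H_def by (rule image_eqI)
  qed
  have fH: "finite H" by simp
  assume hH: "h \<in> (\<lambda>l. \<sigma> l / l) ` (-{0})"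
  have hH': "h \<in> H" unfolding H_def by (rule hH)
  have "h ^ card H = 1" by (rule prod_trick[OF fH n0 _ hH']) (fact cl)
  thus "h ^ n = 1" using cH' by simp
qed





theorem proposition4p3:
  fixes w v w' v' :: "'a::{field,finite} \<times> 'a"
    and \<rho> \<rho>' :: 'a and \<tau> \<tau>' :: "'a \<Rightarrow> 'a" and q t :: nat
  assumes "t \<ge> 3"
    and "card (UNIV :: 'a set) = q ^ t"
    and "field_aut \<tau>" and "card (Fix \<tau>) = q"
    and "field_aut \<tau>'" and "Fix \<tau>' = Fix \<tau>"
    and "\<rho> \<noteq> 0" and "\<rho>' \<noteq> 0"
    and "w \<noteq> (0, 0)" and "v \<noteq> (0, 0)" and "proj_pt w \<noteq> proj_pt v"
    and "w' \<noteq> (0, 0)" and "v' \<noteq> (0, 0)" and "proj_pt w' \<noteq> proj_pt v'"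
    and "pseudoregulus_set w v \<rho> \<tau> = pseudoregulus_set w' v' \<rho>' \<tau>'"
  shows "{proj_pt w', proj_pt v'} = {proj_pt w, proj_pt v}"
proof -
  note t3 = assms(1) and cU = assms(2) and aut = assms(3) and cq = assms(4)
    and aut' = assms(5) and fix' = assms(6) and LL = assms(15)
  have q2: "q \<ge> 2" using fix_card_ge2[OF aut] cq by simp
  define m where "m = (\<Sum>i<t - 2. q ^ i)"
  define n where "n = 1 + q + q * q * m"
  have m1: "m \<ge> 1"
  proof -
    have "q ^ 0 \<le> m" unfolding m_def using t3 by (intro member_le_sum) auto
    thus ?thesis by simp
  qed
  have gm: "m * (q - 1) + 1 = q ^ (t - 2)" unfolding m_def by (rule geo_sum) (use q2 in simp)
  have qt: "q ^ t = q * q * q ^ (t - 2)"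
  proof -
    have "t = Suc (Suc (t - 2))" using t3 by simp
    hence "q ^ t = q ^ Suc (Suc (t - 2))" by simp
    thus ?thesis by simp
  qed
  have n_eq: "n * (q - 1) + 1 = q ^ t"
  proof -
    obtain r where r: "q = Suc r" using q2 by (cases q) auto
    have "n * (q - 1) + 1 = q * q * (m * (q - 1) + 1)" unfolding n_def r by (simp add: algebra_simps)
    thus ?thesis unfolding qt gm .
  qed
  have cq': "card (Fix \<tau>') = q" using fix' cq by simp
  note H1 = H_props[OF aut, unfolded cq, OF cU n_eq]
  note H2 = H_props[OF aut', unfolded cq', OF cU n_eq]
  have fq: "(a + b) ^ q = a ^ q + b ^ q" for a b :: 'a using frob[OF aut] cq by simp
  have qq: "q * q < card (UNIV::'a set)"
  proof -
    have "q * q * 1 < q * q * q ^ (t - 2)"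
    proof (intro mult_strict_left_mono)
      show "1 < q ^ (t - 2)" using q2 t3 by (intro one_less_power) auto
    qed (use q2 in auto)
    thus ?thesis using cU qt by simp
  qed
  have qn: "Suc q < n"
  proof -
    have a1: "q * 2 \<le> q * q" using q2 by (rule mult_le_mono2)
    have a2: "q * q * 1 \<le> q * q * m" using m1 by (rule mult_le_mono2)
    show ?thesis unfolding n_def using a1 a2 q2 by linarith
  qed
  obtain w1 w2 where w: "w = (w1, w2)" by fastforce
  obtain v1 v2 where v: "v = (v1, v2)" by fastforce
  obtain w1' w2' where w': "w' = (w1', w2')" by fastforce
  obtain v1' v2' where v': "v' = (v1', v2')" by fastforce
  define D where "D = w1 * v2 - w2 * v1"
  have D: "D \<noteq> 0" using proj_dep[OF assms(9,10)] assms(11) w v unfolding D_def by auto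
  have D': "w1' * v2' - w2' * v1' \<noteq> 0" using proj_dep[OF assms(12,13)] assms(14) w' v' by auto
  define \<alpha> where "\<alpha> = (w1' * v2 - w2' * v1) / D"
  define \<beta> where "\<beta> = (w1 * w2' - w2 * w1') / D"
  define \<gamma> where "\<gamma> = (v1' * v2 - v2' * v1) / D"
  define \<delta> where "\<delta> = (w1 * v2' - w2 * v1') / D"
  have cram: "A / D * a + B / D * b = c" if "A * a + B * b = c * D" for A B a b c
  proof -
    have "A / D * a + B / D * b = (A * a + B * b) / D" by (simp add: add_divide_distrib)
    thus ?thesis using that D by simp
  qed
  have c1: "w1' = \<alpha> * w1 + \<beta> * v1" "w2' = \<alpha> * w2 + \<beta> * v2"
    unfolding \<alpha>_def \<beta>_def by (rule sym, rule cram, simp add: D_def algebra_simps)+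
  have c2: "v1' = \<gamma> * w1 + \<delta> * v1" "v2' = \<gamma> * w2 + \<delta> * v2"
    unfolding \<gamma>_def \<delta>_def by (rule sym, rule cram, simp add: D_def algebra_simps)+
  have det: "\<alpha> * \<delta> - \<beta> * \<gamma> \<noteq> 0"
  proof
    assume "\<alpha> * \<delta> - \<beta> * \<gamma> = 0"
    moreover have "w1' * v2' - w2' * v1' = (\<alpha> * \<delta> - \<beta> * \<gamma>) * D"
      unfolding c1 c2 D_def by (simp add: algebra_simps)
    ultimately show False using D' by simp
  qed
  define S' where "S' = (\<lambda>l. \<rho>' * \<tau>' l / l) ` (-{0})"
  have S'eq: "S' = (*) \<rho>' ` ((\<lambda>l. \<tau>' l / l) ` (-{0}))" unfolding S'_def image_image by (simp add: times_divide_eq_right)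
  have cS': "card S' = n" unfolding S'eq
  proof (subst card_image)
    show "inj_on ((*) \<rho>') ((\<lambda>l. \<tau>' l / l) ` (-{0}))" using assms(8) by (simp add: inj_on_def)
  qed (rule H2(1))
  have key: "poly ([:\<beta>, \<delta>:] ^ n) z = \<rho> ^ n * poly ([:\<alpha>, \<gamma>:] ^ n) z" if zS: "z \<in> S'" for z
  proof -
    obtain l where l: "l \<noteq> 0" "z = \<rho>' * \<tau>' l / l" using zS unfolding S'_def by auto
    define s where "s = \<rho>' * \<tau>' l"
    define x where "x = l * \<alpha> + s * \<gamma>"
    define y where "y = l * \<beta> + s * \<delta>"
    have m0: "proj_pt (vadd (vscale l w') (vscale s v')) \<in> pseudoregulus_set w v \<rho> \<tau>"
      unfolding LL unfolding pseudoregulus_set_def s_def using l(1) by blast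
    have veq: "vadd (vscale l w') (vscale s v') = vadd (vscale x w) (vscale y v)"
      unfolding vav w v w' v' x_def y_def c1 c2 by (simp add: algebra_simps)
    have xyne: "(x, y) \<noteq> (0, 0)"
    proof
      assume "(x, y) = (0, 0)"
      hence xy0: "x = 0" "y = 0" by auto
      have "l * (\<alpha> * \<delta> - \<beta> * \<gamma>) = x * \<delta> - y * \<gamma>"
        unfolding x_def y_def by (simp add: algebra_simps)
      thus False using l(1) det xy0 by simp
    qed
    have Dwv: "fst w * snd v - snd w * fst v \<noteq> 0" using D w v unfolding D_def by simp
    have "x \<noteq> 0 \<and> (\<exists>l. l \<noteq> 0 \<and> y / x = \<rho> * \<tau> l / l)"
      by (rule mem_L[OF Dwv xyne]) (use m0 veq in simp)
    then obtain l2 where x0: "x \<noteq> 0" and l2: "l2 \<noteq> 0" "y / x = \<rho> * \<tau> l2 / l2" by blast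
    have "(\<tau> l2 / l2) ^ n = 1" using H1(2) l2(1) by auto
    hence yx: "(y / x) ^ n = \<rho> ^ n" unfolding l2(2) times_divide_eq_right[symmetric] power_mult_distrib by simp
    have x': "x = l * (\<alpha> + \<gamma> * z)" and y': "y = l * (\<beta> + \<delta> * z)"
      unfolding x_def y_def l(2) s_def using l(1) by (simp_all add: field_simps)
    have r1: "y / x = (\<beta> + \<delta> * z) / (\<alpha> + \<gamma> * z)" using l(1) unfolding x' y' by simp
    have A0: "(\<alpha> + \<gamma> * z) ^ n \<noteq> 0" using x0 x' by simp
    have "(\<beta> + \<delta> * z) ^ n / (\<alpha> + \<gamma> * z) ^ n = \<rho> ^ n"
      using yx unfolding r1 power_divide .
    hence "(\<beta> + \<delta> * z) ^ n = \<rho> ^ n * (\<alpha> + \<gamma> * z) ^ n"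
      using A0 by (simp add: divide_eq_eq)
    thus ?thesis by (simp add: mult.commute)
  qed
  have zn: "z ^ n = \<rho>' ^ n" if zS: "z \<in> S'" for z
  proof -
    obtain h where "h \<in> (\<lambda>l. \<tau>' l / l) ` (-{0})" "z = \<rho>' * h" using zS S'eq by auto
    thus ?thesis using H2(2) by (simp add: power_mult_distrib)
  qed
  define P0 where "P0 = [:\<beta>, \<delta>:] ^ n - smult (\<rho> ^ n) ([:\<alpha>, \<gamma>:] ^ n)"
  define cc where "cc = coeff P0 n"
  define P where "P = P0 - smult cc (monom 1 n - [:\<rho>' ^ n:])"
  have n1: "n \<ge> 1" unfolding n_def by simp
  have P0: "P = 0"
  proof (rule ccontr)
    assume ne: "P \<noteq> 0"
    have d1: "degree ([:\<beta>, \<delta>:] ^ n) \<le> n"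
    proof -
      have "degree [:\<beta>, \<delta>:] * n \<le> n" by (cases "\<delta> = 0") auto
      thus ?thesis using degree_power_le[of "[:\<beta>, \<delta>:]" n] by linarith
    qed
    have d2: "degree ([:\<alpha>, \<gamma>:] ^ n) \<le> n"
    proof -
      have "degree [:\<alpha>, \<gamma>:] * n \<le> n" by (cases "\<gamma> = 0") auto
      thus ?thesis using degree_power_le[of "[:\<alpha>, \<gamma>:]" n] by linarith
    qed
    have dP0: "degree P0 \<le> n" unfolding P0_def
      using d1 d2 by (intro degree_diff_le) (auto intro: le_trans[OF degree_smult_le])
    have d3: "degree (monom (1::'a) n - [:\<rho>' ^ n:]) \<le> n"
      using n1 by (intro degree_diff_le) (auto simp: degree_monom_le)
    have dP: "degree P \<le> n" unfolding P_def
      using dP0 d3 by (intro degree_diff_le) (auto intro: le_trans[OF degree_smult_le])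
    have cn: "coeff [:\<rho>' ^ n:] n = 0" using n1 by (cases n) auto
    have "coeff P n = 0" unfolding P_def cc_def using cn by simp
    hence "degree P \<noteq> n" using ne by (metis leading_coeff_0_iff)
    hence dl: "degree P < n" using dP by simp
    have "S' \<subseteq> {x. poly P x = 0}"
      using key zn unfolding P_def P0_def by (auto simp: poly_monom)
    hence "card S' \<le> card {x. poly P x = 0}" by (intro card_mono) auto
    also have "\<dots> \<le> degree P" by (rule card_poly_roots_bound[OF ne])
    finally show False using dl cS' by simp
  qed
  have ceq: "coeff ([:\<beta>, \<delta>:] ^ n) k = \<rho> ^ n * coeff ([:\<alpha>, \<gamma>:] ^ n) k" if "0 < k" "k < n" for k
  proof -
    have "coeff P k = 0" using P0 by simp
    moreover have "coeff [:\<rho>' ^ n:] k = 0" using that(1) by (cases k) auto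
    ultimately show ?thesis using that unfolding P_def P0_def by (simp add: coeff_monom)
  qed
  have X1: "\<beta> * \<delta> ^ q * (\<beta> ^ (q * q)) ^ m = \<rho> ^ n * (\<alpha> * \<gamma> ^ q * (\<alpha> ^ (q * q)) ^ m)"
    using ceq[of q] qn q2 unfolding n_def coeff_big(1)[OF q2 fq qq] by simp
  have X2: "\<delta> * \<delta> ^ q * (\<beta> ^ (q * q)) ^ m = \<rho> ^ n * (\<gamma> * \<gamma> ^ q * (\<alpha> ^ (q * q)) ^ m)"
    using ceq[of "Suc q"] qn q2 unfolding n_def coeff_big(2)[OF q2 fq qq] by simp
  define E where "E = (\<beta> ^ (q * q)) ^ m"
  define E' where "E' = (\<alpha> ^ (q * q)) ^ m"
  define b where "b = \<rho> ^ n"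
  have E'0: "E' = 0 \<Longrightarrow> \<alpha> = 0" unfolding E'_def by simp
  have E0: "E = 0 \<Longrightarrow> \<beta> = 0" unfolding E_def by simp
  have b0: "b \<noteq> 0" unfolding b_def using assms(7) by simp
  have Y1: "\<beta> * \<delta> ^ q * E = b * (\<alpha> * \<gamma> ^ q * E')" using X1 unfolding E_def E'_def b_def .
  have Y2: "\<delta> * \<delta> ^ q * E = b * (\<gamma> * \<gamma> ^ q * E')" using X2 unfolding E_def E'_def b_def .
  have "(b * \<gamma> ^ q * E') * (\<beta> * \<gamma> - \<alpha> * \<delta>) = \<beta> * (b * (\<gamma> * \<gamma> ^ q * E')) - \<delta> * (b * (\<alpha> * \<gamma> ^ q * E'))"
    by (simp add: algebra_simps)
  also have "\<dots> = 0" unfolding Y1[symmetric] Y2[symmetric] by (simp add: algebra_simps)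
  finally have Z1: "\<gamma> = 0 \<or> \<alpha> = 0" using b0 det E'0 by auto
  have "(\<delta> ^ q * E) * (\<alpha> * \<delta> - \<beta> * \<gamma>) = \<alpha> * (\<delta> * \<delta> ^ q * E) - \<gamma> * (\<beta> * \<delta> ^ q * E)"
    by (simp add: algebra_simps)
  also have "\<dots> = 0" unfolding Y1 Y2 by (simp add: algebra_simps)
  finally have Z2: "\<delta> = 0 \<or> \<beta> = 0" using det E0 by auto
  have cases: "(\<beta> = 0 \<and> \<gamma> = 0) \<or> (\<alpha> = 0 \<and> \<delta> = 0)" using Z1 Z2 det by auto
  have ww: "w' = vadd (vscale \<alpha> w) (vscale \<beta> v)" unfolding vav w v w' c1 by simp
  have vv: "v' = vadd (vscale \<gamma> w) (vscale \<delta> v)" unfolding vav w v v' c2 by simp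
  show ?thesis using cases
  proof
    assume h: "\<beta> = 0 \<and> \<gamma> = 0"
    hence "\<alpha> \<noteq> 0" "\<delta> \<noteq> 0" using det by auto
    moreover have "w' = vscale \<alpha> w" "v' = vscale \<delta> v" using ww vv h by (simp_all add: vadd_def vscale_def)
    ultimately show ?thesis using proj_scale by metis
  next
    assume h: "\<alpha> = 0 \<and> \<delta> = 0"
    hence "\<beta> \<noteq> 0" "\<gamma> \<noteq> 0" using det by auto
    moreover have "w' = vscale \<beta> v" "v' = vscale \<gamma> w" using ww vv h by (simp_all add: vadd_def vscale_def)
    ultimately show ?thesis using proj_scale by (metis insert_commute)
  qed

qed


end
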